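(* Let $\mathbf{T}\subset\mathbb{S}^3$ be a $\mathbb{Z}_2$-symmetric spherical tetrahedron with dihedral angles $A$, $B=E$, $C=F$, $D$ and edge lengths $l_A$, $l_B=l_E$, $l_C=l_F$, $l_D$. Then: (i) $l_A=l_D$ if and only if $A=D$; (ii) $l_A>l_D$ if and only if $A<D$.
   Context: A spherical tetrahedron $\mathbf{T}\subset\mathbb{S}^3=\{x\in\mathbb{R}^4:\langle x,x\rangle=1\}$ is the intersection of $\mathbb{S}^3$ with the cone $\{\sum_{i=0}^3\lambda_i\mathrm{p}_i:\lambda_i\ge 0\}$ over four linearly independent unit vectors $\mathrm{p}_0,\dots,\mathrm{p}_3$ (its vertices). Edge lengths $l_{ij}\in[0,\pi]$ are given by $\cos l_{ij}=\langle \mathrm{p}_i,\mathrm{p}_j\rangle$; if $\mathrm{v}_i$ is the outer unit normal to the face opposite $\mathrm{p}_i$, the dihedral angle $\alpha_{ij}\in[0,\pi]$ between faces $i$ and $j$ satisfies $\cos\alpha_{ij}=-\langle \mathrm{v}_i,\mathrm{v}_j\rangle$. Notation: $l_A=l_{01}$, $l_B=l_{02}$, $l_C=l_{03}$, $l_D=l_{23}$, $l_E=l_{13}$, $l_F=l_{12}$, and $A,B,C,D,E,F$ denote the dihedral angles along the edges of lengths $l_A,\dots,l_F$ respectively. $\mathbf{T}$ is called $\mathbb{Z}_2$-symmetric if it is invariant under the rotation through angle $\pi$ about the axis through the midpoints of the edges $\mathrm{p}_0\mathrm{p}_1$ and $\mathrm{p}_2\mathrm{p}_3$; in that case $l_B=l_E$,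 $l_C=l_F$, $B=E$, $C=F$. *)

theory Defs
  imports "HOL-Analysis.Analysis"
begin

definition sph_tetra_vertices :: "(nat \<Rightarrow> real^4) \<Rightarrow> bool" where
  "sph_tetra_vertices p \<longleftrightarrow>
     (\<forall>i<4. norm (p i) = 1) \<and> inj_on p {..<4} \<and> independent (p ` {..<4})"

definition sph_tetra :: "(nat \<Rightarrow> real^4) \<Rightarrow> (real^4) set" where
  "sph_tetra p = {x. norm x = 1 \<and>
      (\<exists>c::nat \<Rightarrow> real. (\<forall>i<4. c i \<ge> 0) \<and> x = (\<Sum>i<4. c i *\<^sub>R p i))}"

text \<open>v is the outer unit normal to the face opposite the vertex p i.\<close>
definition outer_normal :: "(nat \<Rightarrow> real^4) \<Rightarrow> nat \<Rightarrow> real^4 \<Rightarrow> bool" where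
  "outer_normal p i v \<longleftrightarrow> norm v = 1 \<and> (\<forall>j<4. j \<noteq> i \<longrightarrow> v \<bullet> p j = 0) \<and> v \<bullet> p i < 0"

definition edge_len :: "(nat \<Rightarrow> real^4) \<Rightarrow> nat \<Rightarrow> nat \<Rightarrow> real" where
  "edge_len p i j = arccos (p i \<bullet> p j)"

definition dihedral :: "(nat \<Rightarrow> real^4) \<Rightarrow> nat \<Rightarrow> nat \<Rightarrow> real" where
  "dihedral v i j = arccos (- (v i \<bullet> v j))"

text \<open>Z_2-symmetry: invariance under the rotation through angle pi about the axis
 through the midpoints of edges p0p1 and p2p3, i.e. the linear map of R^4 fixing
 the plane spanned by p0+p1 and p2+p3 pointwise and acting as -id (rotation by pi)
 on its orthogonal complement.\<close>
definition Z2_symmetric :: "(nat \<Rightarrow> real^4) \<Rightarrow> bool" where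
  "Z2_symmetric p \<longleftrightarrow>
     (\<exists>R :: real^4 \<Rightarrow> real^4. linear R \<and>
        (\<forall>x\<in>span {p 0 + p 1, p 2 + p 3}. R x = x) \<and>
        (\<forall>x. (\<forall>y\<in>span {p 0 + p 1, p 2 + p 3}. x \<bullet> y = 0) \<longrightarrow> R x = - x) \<and>
        R ` sph_tetra p = sph_tetra p)"

end

theory Submission
  imports Defs
begin

lemma sum4: "(\<Sum>i<(4::nat). f i) = f 0 + f 1 + f 2 + (f 3 :: 'a::comm_monoid_add)"
  by (simp add: eval_nat_numeral add_ac)

lemma coef0:
  assumes "sph_tetra_vertices p"
    and "a0 *\<^sub>R p 0 + a1 *\<^sub>R p 1 + a2 *\<^sub>R p 2 + a3 *\<^sub>R p 3 = 0"
  shows "a0 = 0 \<and> a1 = 0 \<and> a2 = 0 \<and> a3 = 0"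
proof -
  have inj: "inj_on p {..<4}" and ind: "independent (p ` {..<4})"
    using assms(1) unfolding sph_tetra_vertices_def by auto
  define c :: "nat \<Rightarrow> real" where "c i = (if i = 0 then a0 else if i = 1 then a1 else if i = 2 then a2 else a3)" for i
  define u where "u y = c (the_inv_into {..<4} p y)" for y
  have fin: "finite (p ` {..<4})" by simp
  have "(\<Sum>y\<in>p ` {..<4}. u y *\<^sub>R y) = (\<Sum>i<4. u (p i) *\<^sub>R p i)"
    by (rule sum.reindex[OF inj, unfolded comp_def])
  also have "\<dots> = (\<Sum>i<4. c i *\<^sub>R p i)"
    by (rule sum.cong) (auto simp: u_def the_inv_into_f_f[OF inj])
  also have "\<dots> = 0" using assms(2)
    by (simp only: sum4) (simp add: c_def)
  finally have "(\<Sum>y\<in>p ` {..<4}. u y *\<^sub>R y) = 0" .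
  with ind have "\<forall>y\<in>p ` {..<4}. u y = 0"
    unfolding independent_explicit by blast
  hence "\<forall>i<4. c i = 0" by (auto simp: u_def the_inv_into_f_f[OF inj])
  thus ?thesis by (auto simp: c_def dest: spec[of _ 0] spec[of _ 1] spec[of _ 2] spec[of _ 3])
qed

lemma span4:
  assumes "sph_tetra_vertices p"
  shows "\<exists>c0 c1 c2 c3. x = c0 *\<^sub>R p 0 + c1 *\<^sub>R p 1 + c2 *\<^sub>R p 2 + c3 *\<^sub>R p 3"
proof -
  have inj: "inj_on p {..<4}" and ind: "independent (p ` {..<4})"
    using assms(1) unfolding sph_tetra_vertices_def by auto
  have card: "card (p ` {..<4}) = 4" using card_image[OF inj] by simp
  have "UNIV \<subseteq> span (p ` {..<4})"
    by (rule card_ge_dim_independent[OF _ ind]) (auto simp: card)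
  hence "x \<in> range (\<lambda>u. \<Sum>v\<in>p ` {..<4}. u v *\<^sub>R v)"
    using span_finite[of "p ` {..<4}"] by auto
  then obtain u where "x = (\<Sum>v\<in>p ` {..<4}. u v *\<^sub>R v)" by auto
  also have "\<dots> = (\<Sum>i<4. u (p i) *\<^sub>R p i)"
    by (rule sum.reindex[OF inj, unfolded comp_def])
  finally show ?thesis
    by (simp only: sum4) blast
qed

lemma inT:
  assumes "x \<in> sph_tetra p"
  shows "norm x = 1 \<and> (\<exists>c0 c1 c2 c3. c0 \<ge> 0 \<and> c1 \<ge> 0 \<and> c2 \<ge> 0 \<and> c3 \<ge> 0 \<and>
           x = c0 *\<^sub>R p 0 + c1 *\<^sub>R p 1 + c2 *\<^sub>R p 2 + c3 *\<^sub>R p 3)"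
proof -
  obtain c where "norm x = 1" "\<forall>i<4. c i \<ge> 0" "x = (\<Sum>i<4. c i *\<^sub>R p i)"
    using assms unfolding sph_tetra_def by blast
  thus ?thesis by (simp only: sum4) (intro conjI exI[of _ "c 0"] exI[of _ "c 1"] exI[of _ "c 2"] exI[of _ "c 3"], auto)
qed

lemma vertT:
  assumes "norm (p i) = 1" "i < 4"
  shows "p i \<in> sph_tetra p"
  unfolding sph_tetra_def
proof (intro CollectI conjI exI[of _ "\<lambda>j. if j = i then 1 else 0"])
  show "norm (p i) = 1" by fact
  show "\<forall>j<4. 0 \<le> (if j = i then 1 else (0::real))" by auto
  show "p i = (\<Sum>j<4. (if j = i then 1 else 0) *\<^sub>R p j)"
  proof -
    have "i = 0 \<or> i = 1 \<or> i = 2 \<or> i = 3" using assms(2) by auto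
    thus ?thesis by (simp only: sum4) auto
  qed
qed

lemma z2_inner:
  assumes V: "sph_tetra_vertices p" and Z: "Z2_symmetric p"
  shows "p 0 \<bullet> p 2 = p 1 \<bullet> p 3 \<and> p 0 \<bullet> p 3 = p 1 \<bullet> p 2"
proof -
  define S where "S = {p 0 + p 1, p 2 + p 3}"
  obtain R where lin: "linear R" and fixR: "\<And>x. x \<in> span S \<Longrightarrow> R x = x"
    and negR: "\<And>x. (\<forall>y\<in>span S. x \<bullet> y = 0) \<Longrightarrow> R x = - x"
    and img: "R ` sph_tetra p = sph_tetra p"
    using Z unfolding Z2_symmetric_def S_def by blast
  have dec: "\<exists>e f. e \<in> span S \<and> (\<forall>y\<in>span S. f \<bullet> y = 0) \<and> x = e + f" for x
    using orthogonal_subspace_decomp_exists[of S x] unfolding orthogonal_def by metis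
  have Rdec: "R (e + f) = e - f" if "e \<in> span S" "\<forall>y\<in>span S. f \<bullet> y = 0" for e f
    using that fixR negR linear_add[OF lin] by simp
  have RR: "R (R x) = x" for x
  proof -
    obtain e f where ef: "e \<in> span S" "\<forall>y\<in>span S. f \<bullet> y = 0" "x = e + f" using dec by blast
    have "R x = e + (- f)" using Rdec ef by simp
    also have "R \<dots> = e - (- f)" by (rule Rdec) (use ef in auto)
    finally show ?thesis using ef by simp
  qed
  have iso: "R x \<bullet> R y = x \<bullet> y" for x y
  proof -
    obtain e f where ef: "e \<in> span S" "\<forall>y\<in>span S. f \<bullet> y = 0" "x = e + f" using dec by blast
    obtain e' f' where ef': "e' \<in> span S" "\<forall>y\<in>span S. f' \<bullet> y = 0" "y = e' + f'" using dec by blast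
    have o1: "f \<bullet> e' = 0" "f' \<bullet> e = 0" using ef ef' by auto
    hence o2: "e' \<bullet> f = 0" "e \<bullet> f' = 0" by (simp_all add: inner_commute)
    show ?thesis using Rdec[OF ef(1,2)] Rdec[OF ef'(1,2)] ef(3) ef'(3) o1 o2
      by (simp add: inner_add_left inner_add_right inner_diff_left inner_diff_right)
  qed
  have fixpt: False if "R (p i) = p i" "i = 0 \<or> i = 2" for i
  proof -
    obtain e f where ef: "e \<in> span S" "\<forall>y\<in>span S. f \<bullet> y = 0" "p i = e + f" using dec by blast
    have "e - f = e + f" using Rdec[OF ef(1,2)] ef(3) that(1) by simp
    have "f + f = (e + f) - (e - f)" by simp
    also have "\<dots> = 0" using \<open>e - f = e + f\<close> by simp
    finally have "(2::real) *\<^sub>R f = 0" by (simp add: scaleR_2)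
    hence "f = 0" by simp
    hence "p i \<in> span S" using ef by simp
    then obtain k t where kt: "p i = k *\<^sub>R (p 0 + p 1) + t *\<^sub>R (p 2 + p 3)"
      unfolding S_def span_insert span_singleton by (auto simp: algebra_simps)
    show False
    proof (cases "i = 0")
      case True
      have "(1 - k) *\<^sub>R p 0 + (- k) *\<^sub>R p 1 + (- t) *\<^sub>R p 2 + (- t) *\<^sub>R p 3 = 0"
        using kt True by (simp add: algebra_simps)
      from coef0[OF V this] show False by auto
    next
      case False
      hence "i = 2" using that by auto
      have "(- k) *\<^sub>R p 0 + (- k) *\<^sub>R p 1 + (1 - t) *\<^sub>R p 2 + (- t) *\<^sub>R p 3 = 0"
        using kt \<open>i = 2\<close> by (simp add: algebra_simps)
      from coef0[OF V this] show False by auto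
    qed
  qed
  have nrm: "norm (p i) = 1" if "i < 4" for i using V that unfolding sph_tetra_vertices_def by auto
  have RT: "R (p i) \<in> sph_tetra p" if "i < 4" for i
    using vertT[of p i, OF nrm[OF that] that] img by blast
  obtain a0 a1 a2 a3 where a: "a0 \<ge> 0" "a1 \<ge> 0" "a2 \<ge> 0" "a3 \<ge> 0"
    "R (p 0) = a0 *\<^sub>R p 0 + a1 *\<^sub>R p 1 + a2 *\<^sub>R p 2 + a3 *\<^sub>R p 3"
    using inT[OF RT[of 0]] by auto
  obtain b0 b1 b2 b3 where b: "b0 \<ge> 0" "b1 \<ge> 0" "b2 \<ge> 0" "b3 \<ge> 0"
    "R (p 1) = b0 *\<^sub>R p 0 + b1 *\<^sub>R p 1 + b2 *\<^sub>R p 2 + b3 *\<^sub>R p 3"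
    using inT[OF RT[of 1]] by auto
  obtain c0 c1 c2 c3 where c: "c0 \<ge> 0" "c1 \<ge> 0" "c2 \<ge> 0" "c3 \<ge> 0"
    "R (p 2) = c0 *\<^sub>R p 0 + c1 *\<^sub>R p 1 + c2 *\<^sub>R p 2 + c3 *\<^sub>R p 3"
    using inT[OF RT[of 2]] by auto
  obtain d0 d1 d2 d3 where d: "d0 \<ge> 0" "d1 \<ge> 0" "d2 \<ge> 0" "d3 \<ge> 0"
    "R (p 3) = d0 *\<^sub>R p 0 + d1 *\<^sub>R p 1 + d2 *\<^sub>R p 2 + d3 *\<^sub>R p 3"
    using inT[OF RT[of 3]] by auto
  have "R (p 0 + p 1) = p 0 + p 1" by (rule fixR) (simp add: S_def span_base)
  hence "R (p 0) + R (p 1) = p 0 + p 1" using linear_add[OF lin] by simp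
  hence "(a0 + b0 - 1) *\<^sub>R p 0 + (a1 + b1 - 1) *\<^sub>R p 1 + (a2 + b2) *\<^sub>R p 2 + (a3 + b3) *\<^sub>R p 3 = 0"
    using a(5) b(5) by (simp add: algebra_simps)
  from coef0[OF V this] a b have ab: "a2 = 0" "a3 = 0" "b2 = 0" "b3 = 0" "a0 + b0 = 1" "a1 + b1 = 1" by auto
  have "R (p 2 + p 3) = p 2 + p 3" by (rule fixR) (simp add: S_def span_base)
  hence "R (p 2) + R (p 3) = p 2 + p 3" using linear_add[OF lin] by simp
  hence "(c0 + d0) *\<^sub>R p 0 + (c1 + d1) *\<^sub>R p 1 + (c2 + d2 - 1) *\<^sub>R p 2 + (c3 + d3 - 1) *\<^sub>R p 3 = 0"
    using c(5) d(5) by (simp add: algebra_simps)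
  from coef0[OF V this] c d have cd: "c0 = 0" "c1 = 0" "d0 = 0" "d1 = 0" "c2 + d2 = 1" "c3 + d3 = 1" by auto
  have Ra: "R (p 0) = a0 *\<^sub>R p 0 + a1 *\<^sub>R p 1" using a(5) ab by simp
  have Rb: "R (p 1) = b0 *\<^sub>R p 0 + b1 *\<^sub>R p 1" using b(5) ab by simp
  have Rc: "R (p 2) = c2 *\<^sub>R p 2 + c3 *\<^sub>R p 3" using c(5) cd by simp
  have Rd: "R (p 3) = d2 *\<^sub>R p 2 + d3 *\<^sub>R p 3" using d(5) cd by simp
  have "p 0 = R (R (p 0))" by (simp add: RR)
  also have "\<dots> = a0 *\<^sub>R R (p 0) + a1 *\<^sub>R R (p 1)" using Ra linear_add[OF lin] linear_scale[OF lin] by simp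
  finally have "(a0 * a0 + a1 * b0 - 1) *\<^sub>R p 0 + (a0 * a1 + a1 * b1) *\<^sub>R p 1 + 0 *\<^sub>R p 2 + 0 *\<^sub>R p 3 = 0"
    using Ra Rb by (simp add: algebra_simps)
  from coef0[OF V this] have aa: "a1 * (a0 + b1) = 0" by (simp add: algebra_simps)
  have "p 2 = R (R (p 2))" by (simp add: RR)
  also have "\<dots> = c2 *\<^sub>R R (p 2) + c3 *\<^sub>R R (p 3)" using Rc linear_add[OF lin] linear_scale[OF lin] by simp
  finally have "0 *\<^sub>R p 0 + 0 *\<^sub>R p 1 + (c2 * c2 + c3 * d2 - 1) *\<^sub>R p 2 + (c2 * c3 + c3 * d3) *\<^sub>R p 3 = 0"
    using Rc Rd by (simp add: algebra_simps)
  from coef0[OF V this] have cc: "c3 * (c2 + d3) = 0" by (simp add: algebra_simps)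
  have a1nz: "a1 \<noteq> 0"
  proof
    assume h: "a1 = 0"
    have "norm (R (p 0)) = 1" using inT[OF RT[of 0]] by simp
    hence "\<bar>a0\<bar> = 1" using Ra h nrm[of 0] by simp
    hence "a0 = 1" using a(1) by simp
    thus False using fixpt[of 0] Ra h by simp
  qed
  have c3nz: "c3 \<noteq> 0"
  proof
    assume h: "c3 = 0"
    have "norm (R (p 2)) = 1" using inT[OF RT[of 2]] by simp
    hence "\<bar>c2\<bar> = 1" using Rc h nrm[of 2] by simp
    hence "c2 = 1" using c(3) by simp
    thus False using fixpt[of 2] Rc h by simp
  qed
  have "a0 = 0" "b1 = 0" using aa a1nz a(1) b(2) by auto
  hence R01: "R (p 0) = p 1" "R (p 1) = p 0" using Ra Rb ab by auto
  have "c2 = 0" "d3 = 0" using cc c3nz c(3) d(4) by auto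
  hence R23: "R (p 2) = p 3" "R (p 3) = p 2" using Rc Rd cd by auto
  show ?thesis using iso[of "p 0" "p 2"] iso[of "p 0" "p 3"] R01 R23 by simp
qed


lemma cramer:
  fixes a b c d x0 x1 x2 x3 e0 e1 e2 e3 :: real
  assumes "x0 + a*x1 + b*x2 + c*x3 = e0" "a*x0 + x1 + c*x2 + b*x3 = e1"
    "b*x0 + c*x1 + x2 + d*x3 = e2" "c*x0 + b*x1 + d*x2 + x3 = e3"
  shows "(((1+a)*(1+d)-(b+c)^2)*((1-a)*(1-d)-(b-c)^2)) * x0 = e0*(0 - (b^2) + (2*b*c*d) - (c^2) - (d^2) + (1)) + e1*((a*d^2) - (a) - (b^2*d) + (2*b*c) - (c^2*d)) + e2*(0 - (a*b*d) + (a*c) + (b^3) - (b*c^2) - (b) + (c*d)) + e3*((a*b) - (a*c*d) - (b^2*c) + (b*d) + (c^3) - (c))"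
    and "(((1+a)*(1+d)-(b+c)^2)*((1-a)*(1-d)-(b-c)^2)) * x1 = e0*((a*d^2) - (a) - (b^2*d) + (2*b*c) - (c^2*d)) + e1*(0 - (b^2) + (2*b*c*d) - (c^2) - (d^2) + (1)) + e2*((a*b) - (a*c*d) - (b^2*c) + (b*d) + (c^3) - (c)) + e3*(0 - (a*b*d) + (a*c) + (b^3) - (b*c^2) - (b) + (c*d))"
    and "(((1+a)*(1+d)-(b+c)^2)*((1-a)*(1-d)-(b-c)^2)) * x2 = e0*(0 - (a*b*d) + (a*c) + (b^3) - (b*c^2) - (b) + (c*d)) + e1*((a*b) - (a*c*d) - (b^2*c) + (b*d) + (c^3) - (c)) + e2*(0 - (a^2) + (2*a*b*c) - (b^2) - (c^2) + (1)) + e3*((a^2*d) - (a*b^2) - (a*c^2) + (2*b*c) - (d))"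
    and "(((1+a)*(1+d)-(b+c)^2)*((1-a)*(1-d)-(b-c)^2)) * x3 = e0*((a*b) - (a*c*d) - (b^2*c) + (b*d) + (c^3) - (c)) + e1*(0 - (a*b*d) + (a*c) + (b^3) - (b*c^2) - (b) + (c*d)) + e2*((a^2*d) - (a*b^2) - (a*c^2) + (2*b*c) - (d)) + e3*(0 - (a^2) + (2*a*b*c) - (b^2) - (c^2) + (1))"
proof -
  have "(((1+a)*(1+d)-(b+c)^2)*((1-a)*(1-d)-(b-c)^2)) * x0 = (x0 + a*x1 + b*x2 + c*x3)*(0 - (b^2) + (2*b*c*d) - (c^2) - (d^2) + (1)) + (a*x0 + x1 + c*x2 + b*x3)*((a*d^2) - (a) - (b^2*d) + (2*b*c) - (c^2*d)) + (b*x0 + c*x1 + x2 + d*x3)*(0 - (a*b*d) + (a*c) + (b^3) - (b*c^2) - (b) + (c*d)) + (c*x0 + b*x1 + d*x2 + x3)*((a*b) - (a*c*d) - (b^2*c) + (b*d) + (c^3) - (c))" by algebra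
  thus "(((1+a)*(1+d)-(b+c)^2)*((1-a)*(1-d)-(b-c)^2)) * x0 = e0*(0 - (b^2) + (2*b*c*d) - (c^2) - (d^2) + (1)) + e1*((a*d^2) - (a) - (b^2*d) + (2*b*c) - (c^2*d)) + e2*(0 - (a*b*d) + (a*c) + (b^3) - (b*c^2) - (b) + (c*d)) + e3*((a*b) - (a*c*d) - (b^2*c) + (b*d) + (c^3) - (c))" using assms by simp
  have "(((1+a)*(1+d)-(b+c)^2)*((1-a)*(1-d)-(b-c)^2)) * x1 = (x0 + a*x1 + b*x2 + c*x3)*((a*d^2) - (a) - (b^2*d) + (2*b*c) - (c^2*d)) + (a*x0 + x1 + c*x2 + b*x3)*(0 - (b^2) + (2*b*c*d) - (c^2) - (d^2) + (1)) + (b*x0 + c*x1 + x2 + d*x3)*((a*b) - (a*c*d) - (b^2*c) + (b*d) + (c^3) - (c)) + (c*x0 + b*x1 + d*x2 + x3)*(0 - (a*b*d) + (a*c) + (b^3) - (b*c^2) - (b) + (c*d))" by algebra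
  thus "(((1+a)*(1+d)-(b+c)^2)*((1-a)*(1-d)-(b-c)^2)) * x1 = e0*((a*d^2) - (a) - (b^2*d) + (2*b*c) - (c^2*d)) + e1*(0 - (b^2) + (2*b*c*d) - (c^2) - (d^2) + (1)) + e2*((a*b) - (a*c*d) - (b^2*c) + (b*d) + (c^3) - (c)) + e3*(0 - (a*b*d) + (a*c) + (b^3) - (b*c^2) - (b) + (c*d))" using assms by simp
  have "(((1+a)*(1+d)-(b+c)^2)*((1-a)*(1-d)-(b-c)^2)) * x2 = (x0 + a*x1 + b*x2 + c*x3)*(0 - (a*b*d) + (a*c) + (b^3) - (b*c^2) - (b) + (c*d)) + (a*x0 + x1 + c*x2 + b*x3)*((a*b) - (a*c*d) - (b^2*c) + (b*d) + (c^3) - (c)) + (b*x0 + c*x1 + x2 + d*x3)*(0 - (a^2) + (2*a*b*c) - (b^2) - (c^2) + (1)) + (c*x0 + b*x1 + d*x2 + x3)*((a^2*d) - (a*b^2) - (a*c^2) + (2*b*c) - (d))" by algebra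
  thus "(((1+a)*(1+d)-(b+c)^2)*((1-a)*(1-d)-(b-c)^2)) * x2 = e0*(0 - (a*b*d) + (a*c) + (b^3) - (b*c^2) - (b) + (c*d)) + e1*((a*b) - (a*c*d) - (b^2*c) + (b*d) + (c^3) - (c)) + e2*(0 - (a^2) + (2*a*b*c) - (b^2) - (c^2) + (1)) + e3*((a^2*d) - (a*b^2) - (a*c^2) + (2*b*c) - (d))" using assms by simp
  have "(((1+a)*(1+d)-(b+c)^2)*((1-a)*(1-d)-(b-c)^2)) * x3 = (x0 + a*x1 + b*x2 + c*x3)*((a*b) - (a*c*d) - (b^2*c) + (b*d) + (c^3) - (c)) + (a*x0 + x1 + c*x2 + b*x3)*(0 - (a*b*d) + (a*c) + (b^3) - (b*c^2) - (b) + (c*d)) + (b*x0 + c*x1 + x2 + d*x3)*((a^2*d) - (a*b^2) - (a*c^2) + (2*b*c) - (d)) + (c*x0 + b*x1 + d*x2 + x3)*(0 - (a^2) + (2*a*b*c) - (b^2) - (c^2) + (1))" by algebra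
  thus "(((1+a)*(1+d)-(b+c)^2)*((1-a)*(1-d)-(b-c)^2)) * x3 = e0*((a*b) - (a*c*d) - (b^2*c) + (b*d) + (c^3) - (c)) + e1*(0 - (a*b*d) + (a*c) + (b^3) - (b*c^2) - (b) + (c*d)) + e2*((a^2*d) - (a*b^2) - (a*c^2) + (2*b*c) - (d)) + e3*(0 - (a^2) + (2*a*b*c) - (b^2) - (c^2) + (1))" using assms by simp
qed


lemma final_alg:
  fixes a b c d m0 m1 m2 m3 x00 x01 x02 x03 x10 x11 x12 x13 x20 x21 x22 x23 x30 x31 x32 x33 :: real
  assumes r0: "x00 + a*x01 + b*x02 + c*x03 = m0" "a*x00 + x01 + c*x02 + b*x03 = 0" "b*x00 + c*x01 + x02 + d*x03 = 0" "c*x00 + b*x01 + d*x02 + x03 = 0"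
    and r1: "x10 + a*x11 + b*x12 + c*x13 = 0" "a*x10 + x11 + c*x12 + b*x13 = m1" "b*x10 + c*x11 + x12 + d*x13 = 0" "c*x10 + b*x11 + d*x12 + x13 = 0"
    and r2: "x20 + a*x21 + b*x22 + c*x23 = 0" "a*x20 + x21 + c*x22 + b*x23 = 0" "b*x20 + c*x21 + x22 + d*x23 = m2" "c*x20 + b*x21 + d*x22 + x23 = 0"
    and r3: "x30 + a*x31 + b*x32 + c*x33 = 0" "a*x30 + x31 + c*x32 + b*x33 = 0" "b*x30 + c*x31 + x32 + d*x33 = 0" "c*x30 + b*x31 + d*x32 + x33 = m3"
    and m: "m0 < 0" "m1 < 0" "m2 < 0" "m3 < 0"
    and n: "x00*m0 = 1" "x11*m1 = 1" "x22*m2 = 1" "x33*m3 = 1"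
    and PQ: "(1+a)*(1+d)-(b+c)^2 > 0" "(1-a)*(1-d)-(b-c)^2 > 0"
  shows "(x01*m1 = x23*m3 \<longleftrightarrow> a = d) \<and> (x23*m3 < x01*m1 \<longleftrightarrow> a < d)"
proof -
  define D where "D = (((1+a)*(1+d)-(b+c)^2)*((1-a)*(1-d)-(b-c)^2))"
  have Dp: "D > 0" using PQ unfolding D_def by simp
  have c0: "D*x00 = m0*(0 - (b^2) + (2*b*c*d) - (c^2) - (d^2) + (1))" "D*x01 = m0*((a*d^2) - (a) - (b^2*d) + (2*b*c) - (c^2*d))"
    using cramer[OF r0] unfolding D_def by simp_all
  have c1: "D*x11 = m1*(0 - (b^2) + (2*b*c*d) - (c^2) - (d^2) + (1))"
    using cramer[OF r1] unfolding D_def by simp_all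
  have c2: "D*x22 = m2*(0 - (a^2) + (2*a*b*c) - (b^2) - (c^2) + (1))" "D*x23 = m2*((a^2*d) - (a*b^2) - (a*c^2) + (2*b*c) - (d))"
    using cramer[OF r2] unfolding D_def by simp_all
  have c3: "D*x33 = m3*(0 - (a^2) + (2*a*b*c) - (b^2) - (c^2) + (1))"
    using cramer[OF r3] unfolding D_def by simp_all
  have h0: "D = m0^2*(0 - (b^2) + (2*b*c*d) - (c^2) - (d^2) + (1))"
  proof -
    have "D = D*(x00*m0)" using n by simp
    also have "\<dots> = (D*x00)*m0" by (simp only: mult.assoc)
    also have "\<dots> = m0*(0 - (b^2) + (2*b*c*d) - (c^2) - (d^2) + (1))*m0" by (simp only: c0(1))
    also have "\<dots> = m0^2*(0 - (b^2) + (2*b*c*d) - (c^2) - (d^2) + (1))" by algebra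
    finally show ?thesis .
  qed
  have h1: "D = m1^2*(0 - (b^2) + (2*b*c*d) - (c^2) - (d^2) + (1))"
  proof -
    have "D = D*(x11*m1)" using n by simp
    also have "\<dots> = (D*x11)*m1" by (simp only: mult.assoc)
    also have "\<dots> = m1*(0 - (b^2) + (2*b*c*d) - (c^2) - (d^2) + (1))*m1" by (simp only: c1)
    also have "\<dots> = m1^2*(0 - (b^2) + (2*b*c*d) - (c^2) - (d^2) + (1))" by algebra
    finally show ?thesis .
  qed
  have h2: "D = m2^2*(0 - (a^2) + (2*a*b*c) - (b^2) - (c^2) + (1))"
  proof -
    have "D = D*(x22*m2)" using n by simp
    also have "\<dots> = (D*x22)*m2" by (simp only: mult.assoc)
    also have "\<dots> = m2*(0 - (a^2) + (2*a*b*c) - (b^2) - (c^2) + (1))*m2" by (simp only: c2(1))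
    also have "\<dots> = m2^2*(0 - (a^2) + (2*a*b*c) - (b^2) - (c^2) + (1))" by algebra
    finally show ?thesis .
  qed
  have h3: "D = m3^2*(0 - (a^2) + (2*a*b*c) - (b^2) - (c^2) + (1))"
  proof -
    have "D = D*(x33*m3)" using n by simp
    also have "\<dots> = (D*x33)*m3" by (simp only: mult.assoc)
    also have "\<dots> = m3*(0 - (a^2) + (2*a*b*c) - (b^2) - (c^2) + (1))*m3" by (simp only: c3)
    also have "\<dots> = m3^2*(0 - (a^2) + (2*a*b*c) - (b^2) - (c^2) + (1))" by algebra
    finally show ?thesis .
  qed
  have C0p: "(0 - (b^2) + (2*b*c*d) - (c^2) - (d^2) + (1)) > 0" using h0 Dp m(1) by (metis zero_less_mult_pos zero_less_power2 less_irrefl)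
  have C2p: "(0 - (a^2) + (2*a*b*c) - (b^2) - (c^2) + (1)) > 0" using h2 Dp m(3) by (metis zero_less_mult_pos zero_less_power2 less_irrefl)
  have "m0^2 = m1^2" using h0 h1 C0p by simp
  hence m01: "m1 = m0" using m(1,2) by (simp add: power2_eq_iff) 
  have "m2^2 = m3^2" using h2 h3 C2p by simp
  hence m23: "m3 = m2" using m(3,4) by (simp add: power2_eq_iff)
  have v01: "x01*m1*(0 - (b^2) + (2*b*c*d) - (c^2) - (d^2) + (1)) = ((a*d^2) - (a) - (b^2*d) + (2*b*c) - (c^2*d))"
  proof -
    have "m0*(m0*(0 - (b^2) + (2*b*c*d) - (c^2) - (d^2) + (1))*x01) = (m0^2*(0 - (b^2) + (2*b*c*d) - (c^2) - (d^2) + (1)))*x01" by algebra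
    also have "\<dots> = D*x01" using h0 by simp
    also have "\<dots> = m0*((a*d^2) - (a) - (b^2*d) + (2*b*c) - (c^2*d))" by (rule c0(2))
    finally have "m0*(0 - (b^2) + (2*b*c*d) - (c^2) - (d^2) + (1))*x01 = ((a*d^2) - (a) - (b^2*d) + (2*b*c) - (c^2*d))" using m(1) by simp
    moreover have "x01*m1*(0 - (b^2) + (2*b*c*d) - (c^2) - (d^2) + (1)) = m0*(0 - (b^2) + (2*b*c*d) - (c^2) - (d^2) + (1))*x01" unfolding m01 by algebra
    ultimately show ?thesis by simp
  qed
  have v23: "x23*m3*(0 - (a^2) + (2*a*b*c) - (b^2) - (c^2) + (1)) = ((a^2*d) - (a*b^2) - (a*c^2) + (2*b*c) - (d))"
  proof -
    have "m2*(m2*(0 - (a^2) + (2*a*b*c) - (b^2) - (c^2) + (1))*x23) = (m2^2*(0 - (a^2) + (2*a*b*c) - (b^2) - (c^2) + (1)))*x23" by algebra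
    also have "\<dots> = D*x23" using h2 by simp
    also have "\<dots> = m2*((a^2*d) - (a*b^2) - (a*c^2) + (2*b*c) - (d))" by (rule c2(2))
    finally have "m2*(0 - (a^2) + (2*a*b*c) - (b^2) - (c^2) + (1))*x23 = ((a^2*d) - (a*b^2) - (a*c^2) + (2*b*c) - (d))" using m(3) by simp
    moreover have "x23*m3*(0 - (a^2) + (2*a*b*c) - (b^2) - (c^2) + (1)) = m2*(0 - (a^2) + (2*a*b*c) - (b^2) - (c^2) + (1))*x23" unfolding m23 by algebra
    ultimately show ?thesis by simp
  qed
  have idn: "((a*d^2) - (a) - (b^2*d) + (2*b*c) - (c^2*d))*(0 - (a^2) + (2*a*b*c) - (b^2) - (c^2) + (1)) - ((a^2*d) - (a*b^2) - (a*c^2) + (2*b*c) - (d))*(0 - (b^2) + (2*b*c*d) - (c^2) - (d^2) + (1)) = (d-a)*D" unfolding D_def by algebra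
  have "(x01*m1 - x23*m3)*((0 - (b^2) + (2*b*c*d) - (c^2) - (d^2) + (1))*(0 - (a^2) + (2*a*b*c) - (b^2) - (c^2) + (1))) = (x01*m1*(0 - (b^2) + (2*b*c*d) - (c^2) - (d^2) + (1)))*(0 - (a^2) + (2*a*b*c) - (b^2) - (c^2) + (1)) - (x23*m3*(0 - (a^2) + (2*a*b*c) - (b^2) - (c^2) + (1)))*(0 - (b^2) + (2*b*c*d) - (c^2) - (d^2) + (1))" by algebra
  also have "\<dots> = ((a*d^2) - (a) - (b^2*d) + (2*b*c) - (c^2*d))*(0 - (a^2) + (2*a*b*c) - (b^2) - (c^2) + (1)) - ((a^2*d) - (a*b^2) - (a*c^2) + (2*b*c) - (d))*(0 - (b^2) + (2*b*c*d) - (c^2) - (d^2) + (1))" by (simp only: v01 v23)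
  finally have key: "(x01*m1 - x23*m3)*((0 - (b^2) + (2*b*c*d) - (c^2) - (d^2) + (1))*(0 - (a^2) + (2*a*b*c) - (b^2) - (c^2) + (1))) = (d-a)*D" using idn by simp
  have pos: "(0 - (b^2) + (2*b*c*d) - (c^2) - (d^2) + (1))*(0 - (a^2) + (2*a*b*c) - (b^2) - (c^2) + (1)) > 0" using C0p C2p by simp
  define K where "K = (0 - (b^2) + (2*b*c*d) - (c^2) - (d^2) + (1))*(0 - (a^2) + (2*a*b*c) - (b^2) - (c^2) + (1))"
  have Kp: "K > 0" using pos unfolding K_def .
  have key2: "(x01*m1 - x23*m3)*K = (d-a)*D" using key unfolding K_def .
  have X: "x01*m1 - x23*m3 = (d-a)*D/K" using key2 Kp by (simp add: field_simps)
  have e1: "(x01*m1 = x23*m3) = ((d-a)*D/K = 0)" using X by linarith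
  have e2: "(x23*m3 < x01*m1) = (0 < (d-a)*D/K)" using X by linarith
  show ?thesis unfolding e1 e2 using Kp Dp by (auto simp: zero_less_divide_iff zero_less_mult_iff)
qed


lemma expand:
  fixes w q0 q1 q2 q3 u :: "'a::real_inner"
  assumes "w = x0 *\<^sub>R q0 + x1 *\<^sub>R q1 + x2 *\<^sub>R q2 + x3 *\<^sub>R q3"
  shows "w \<bullet> u = x0 * (q0 \<bullet> u) + x1 * (q1 \<bullet> u) + x2 * (q2 \<bullet> u) + x3 * (q3 \<bullet> u)"
  using assms by (simp add: inner_add_left)

lemma strict_cs:
  fixes x y :: "'a::real_inner"
  assumes "y \<noteq> 0" "\<And>t. x \<noteq> t *\<^sub>R y"
  shows "(x \<bullet> y)^2 < (x \<bullet> x) * (y \<bullet> y)"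
proof -
  define t where "t = (x \<bullet> y) / (y \<bullet> y)"
  have yy: "y \<bullet> y > 0" using assms(1) by simp
  have "x - t *\<^sub>R y \<noteq> 0" using assms(2)[of t] by simp
  hence "0 < (x - t *\<^sub>R y) \<bullet> (x - t *\<^sub>R y)" by simp
  also have "\<dots> = x \<bullet> x - 2 * t * (x \<bullet> y) + t^2 * (y \<bullet> y)"
    by (simp add: inner_diff_left inner_diff_right inner_commute power2_eq_square algebra_simps)
  also have "\<dots> = x \<bullet> x - (x \<bullet> y)^2 / (y \<bullet> y)"
    using yy by (simp add: t_def power2_eq_square field_simps)
  finally have "(x \<bullet> y)^2 / (y \<bullet> y) < x \<bullet> x" by simp
  thus ?thesis using yy by (simp add: divide_less_eq)
qed

lemma arccos_less_iff:
  assumes "\<bar>x\<bar> \<le> 1" "\<bar>y\<bar> \<le> 1"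
  shows "arccos x < arccos y \<longleftrightarrow> y < x"
proof
  assume h: "arccos x < arccos y"
  show "y < x"
  proof (rule ccontr)
    assume "\<not> y < x"
    hence "arccos y \<le> arccos x" using assms by (intro arccos_le_arccos) auto
    thus False using h by simp
  qed
next
  assume "y < x" thus "arccos x < arccos y" using assms by (intro arccos_less_arccos) auto
qed

theorem lemma1:
  fixes p v :: "nat \<Rightarrow> real^4"
  assumes "sph_tetra_vertices p"
    and "\<And>i. i < 4 \<Longrightarrow> outer_normal p i (v i)"
    and "Z2_symmetric p"
  shows "(edge_len p 0 1 = edge_len p 2 3 \<longleftrightarrow> dihedral v 2 3 = dihedral v 0 1)
       \<and> (edge_len p 0 1 > edge_len p 2 3 \<longleftrightarrow> dihedral v 2 3 < dihedral v 0 1)"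
proof -
  note V = assms(1)
  have sym: "p 0 \<bullet> p 2 = p 1 \<bullet> p 3" "p 0 \<bullet> p 3 = p 1 \<bullet> p 2" using z2_inner[OF V assms(3)] by auto
  have nrm: "norm (p i) = 1" if "i < 4" for i using V that unfolding sph_tetra_vertices_def by auto
  have ii: "p i \<bullet> p i = 1" if "i < 4" for i using nrm[OF that] by (simp add: power2_norm_eq_inner[symmetric])
  have ON: "norm (v i) = 1 \<and> (\<forall>j<4. j \<noteq> i \<longrightarrow> v i \<bullet> p j = 0) \<and> v i \<bullet> p i < 0" if "i < 4" for i
    using assms(2)[OF that] unfolding outer_normal_def by blast
  have vvi: "v i \<bullet> v i = 1" if "i < 4" for i using ON[OF that] by (simp add: power2_norm_eq_inner[symmetric])
  have vz: "v i \<bullet> p j = 0" if "i < 4" "j < 4" "j \<noteq> i" for i j using ON[OF that(1)] that by blast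
  define a where "a = p 0 \<bullet> p 1"
  define b where "b = p 0 \<bullet> p 2"
  define c where "c = p 0 \<bullet> p 3"
  define d where "d = p 2 \<bullet> p 3"
  define m0 where "m0 = v 0 \<bullet> p 0"
  define m1 where "m1 = v 1 \<bullet> p 1"
  define m2 where "m2 = v 2 \<bullet> p 2"
  define m3 where "m3 = v 3 \<bullet> p 3"
  have mneg: "m0 < 0" "m1 < 0" "m2 < 0" "m3 < 0" using ON[of 0] ON[of 1] ON[of 2] ON[of 3]
    unfolding m0_def m1_def m2_def m3_def by auto
  have IP: "p 0 \<bullet> p 0 = 1" "p 1 \<bullet> p 1 = 1" "p 2 \<bullet> p 2 = 1" "p 3 \<bullet> p 3 = 1"
    "p 0 \<bullet> p 1 = a" "p 1 \<bullet> p 0 = a" "p 0 \<bullet> p 2 = b" "p 2 \<bullet> p 0 = b"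
    "p 0 \<bullet> p 3 = c" "p 3 \<bullet> p 0 = c" "p 1 \<bullet> p 2 = c" "p 2 \<bullet> p 1 = c"
    "p 1 \<bullet> p 3 = b" "p 3 \<bullet> p 1 = b" "p 2 \<bullet> p 3 = d" "p 3 \<bullet> p 2 = d"
    using ii[of 0] ii[of 1] ii[of 2] ii[of 3] sym unfolding a_def b_def c_def d_def
    by (simp_all add: inner_commute)
  have VP: "v 0 \<bullet> p 0 = m0" "v 1 \<bullet> p 1 = m1" "v 2 \<bullet> p 2 = m2" "v 3 \<bullet> p 3 = m3"
    "v 0 \<bullet> p 1 = 0" "v 0 \<bullet> p 2 = 0" "v 0 \<bullet> p 3 = 0"
    "v 1 \<bullet> p 0 = 0" "v 1 \<bullet> p 2 = 0" "v 1 \<bullet> p 3 = 0"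
    "v 2 \<bullet> p 0 = 0" "v 2 \<bullet> p 1 = 0" "v 2 \<bullet> p 3 = 0"
    "v 3 \<bullet> p 0 = 0" "v 3 \<bullet> p 1 = 0" "v 3 \<bullet> p 2 = 0"
    unfolding m0_def m1_def m2_def m3_def by (simp_all add: vz)
  have PV: "p j \<bullet> v i = v i \<bullet> p j" for i j by (simp add: inner_commute)
  obtain x00 x01 x02 x03 where xv0: "v 0 = x00 *\<^sub>R p 0 + x01 *\<^sub>R p 1 + x02 *\<^sub>R p 2 + x03 *\<^sub>R p 3"
    using span4[OF V] by blast
  obtain x10 x11 x12 x13 where xv1: "v 1 = x10 *\<^sub>R p 0 + x11 *\<^sub>R p 1 + x12 *\<^sub>R p 2 + x13 *\<^sub>R p 3"
    using span4[OF V] by blast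
  obtain x20 x21 x22 x23 where xv2: "v 2 = x20 *\<^sub>R p 0 + x21 *\<^sub>R p 1 + x22 *\<^sub>R p 2 + x23 *\<^sub>R p 3"
    using span4[OF V] by blast
  obtain x30 x31 x32 x33 where xv3: "v 3 = x30 *\<^sub>R p 0 + x31 *\<^sub>R p 1 + x32 *\<^sub>R p 2 + x33 *\<^sub>R p 3"
    using span4[OF V] by blast
  have r00: "x00 + a*x01 + b*x02 + c*x03 = m0"
    using expand[OF xv0, of "p 0"] IP VP by (simp add: algebra_simps)
  have r01: "a*x00 + x01 + c*x02 + b*x03 = 0"
    using expand[OF xv0, of "p 1"] IP VP by (simp add: algebra_simps)
  have r02: "b*x00 + c*x01 + x02 + d*x03 = 0"
    using expand[OF xv0, of "p 2"] IP VP by (simp add: algebra_simps)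
  have r03: "c*x00 + b*x01 + d*x02 + x03 = 0"
    using expand[OF xv0, of "p 3"] IP VP by (simp add: algebra_simps)
  have r10: "x10 + a*x11 + b*x12 + c*x13 = 0"
    using expand[OF xv1, of "p 0"] IP VP by (simp add: algebra_simps)
  have r11: "a*x10 + x11 + c*x12 + b*x13 = m1"
    using expand[OF xv1, of "p 1"] IP VP by (simp add: algebra_simps)
  have r12: "b*x10 + c*x11 + x12 + d*x13 = 0"
    using expand[OF xv1, of "p 2"] IP VP by (simp add: algebra_simps)
  have r13: "c*x10 + b*x11 + d*x12 + x13 = 0"
    using expand[OF xv1, of "p 3"] IP VP by (simp add: algebra_simps)
  have r20: "x20 + a*x21 + b*x22 + c*x23 = 0"
    using expand[OF xv2, of "p 0"] IP VP by (simp add: algebra_simps)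
  have r21: "a*x20 + x21 + c*x22 + b*x23 = 0"
    using expand[OF xv2, of "p 1"] IP VP by (simp add: algebra_simps)
  have r22: "b*x20 + c*x21 + x22 + d*x23 = m2"
    using expand[OF xv2, of "p 2"] IP VP by (simp add: algebra_simps)
  have r23: "c*x20 + b*x21 + d*x22 + x23 = 0"
    using expand[OF xv2, of "p 3"] IP VP by (simp add: algebra_simps)
  have r30: "x30 + a*x31 + b*x32 + c*x33 = 0"
    using expand[OF xv3, of "p 0"] IP VP by (simp add: algebra_simps)
  have r31: "a*x30 + x31 + c*x32 + b*x33 = 0"
    using expand[OF xv3, of "p 1"] IP VP by (simp add: algebra_simps)
  have r32: "b*x30 + c*x31 + x32 + d*x33 = 0"
    using expand[OF xv3, of "p 2"] IP VP by (simp add: algebra_simps)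
  have r33: "c*x30 + b*x31 + d*x32 + x33 = m3"
    using expand[OF xv3, of "p 3"] IP VP by (simp add: algebra_simps)
  have n0: "x00*m0 = 1" using expand[OF xv0, of "v 0"] vvi[of 0] PV VP by simp
  have n1: "x11*m1 = 1" using expand[OF xv1, of "v 1"] vvi[of 1] PV VP by simp
  have n2: "x22*m2 = 1" using expand[OF xv2, of "v 2"] vvi[of 2] PV VP by simp
  have n3: "x33*m3 = 1" using expand[OF xv3, of "v 3"] vvi[of 3] PV VP by simp
  have v01: "v 0 \<bullet> v 1 = x01*m1" using expand[OF xv0, of "v 1"] PV VP by simp
  have v23: "v 2 \<bullet> v 3 = x23*m3" using expand[OF xv2, of "v 3"] PV VP by simp
  have Pp: "(1+a)*(1+d)-(b+c)^2 > 0"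
  proof -
    have "p 2 + p 3 \<noteq> 0"
    proof
      assume "p 2 + p 3 = 0"
      hence "0 *\<^sub>R p 0 + 0 *\<^sub>R p 1 + 1 *\<^sub>R p 2 + 1 *\<^sub>R p 3 = 0" by simp
      from coef0[OF V this] show False by simp
    qed
    moreover have "p 0 + p 1 \<noteq> t *\<^sub>R (p 2 + p 3)" for t
    proof
      assume "p 0 + p 1 = t *\<^sub>R (p 2 + p 3)"
      hence "1 *\<^sub>R p 0 + 1 *\<^sub>R p 1 + (-t) *\<^sub>R p 2 + (-t) *\<^sub>R p 3 = 0" by (simp add: algebra_simps)
      from coef0[OF V this] show False by simp
    qed
    ultimately have "((p 0 + p 1) \<bullet> (p 2 + p 3))^2 < ((p 0 + p 1) \<bullet> (p 0 + p 1)) * ((p 2 + p 3) \<bullet> (p 2 + p 3))"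
      by (rule strict_cs)
    moreover have "(p 0 + p 1) \<bullet> (p 2 + p 3) = 2*b + 2*c" "(p 0 + p 1) \<bullet> (p 0 + p 1) = 2 + 2*a"
      "(p 2 + p 3) \<bullet> (p 2 + p 3) = 2 + 2*d"
      unfolding inner_add_left inner_add_right IP by simp_all
    ultimately have "(2*b + 2*c)^2 < (2 + 2*a) * (2 + 2*d)" by simp
    thus ?thesis by (simp add: power2_eq_square algebra_simps)
  qed
  have Qp: "(1-a)*(1-d)-(b-c)^2 > 0"
  proof -
    have "p 2 - p 3 \<noteq> 0"
    proof
      assume "p 2 - p 3 = 0"
      hence "0 *\<^sub>R p 0 + 0 *\<^sub>R p 1 + 1 *\<^sub>R p 2 + (-1) *\<^sub>R p 3 = 0" by simp
      from coef0[OF V this] show False by simp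
    qed
    moreover have "p 0 - p 1 \<noteq> t *\<^sub>R (p 2 - p 3)" for t
    proof
      assume "p 0 - p 1 = t *\<^sub>R (p 2 - p 3)"
      hence "1 *\<^sub>R p 0 + (-1) *\<^sub>R p 1 + (-t) *\<^sub>R p 2 + t *\<^sub>R p 3 = 0" by (simp add: algebra_simps)
      from coef0[OF V this] show False by simp
    qed
    ultimately have "((p 0 - p 1) \<bullet> (p 2 - p 3))^2 < ((p 0 - p 1) \<bullet> (p 0 - p 1)) * ((p 2 - p 3) \<bullet> (p 2 - p 3))"
      by (rule strict_cs)
    moreover have "(p 0 - p 1) \<bullet> (p 2 - p 3) = 2*b - 2*c" "(p 0 - p 1) \<bullet> (p 0 - p 1) = 2 - 2*a"
      "(p 2 - p 3) \<bullet> (p 2 - p 3) = 2 - 2*d"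
      unfolding inner_diff_left inner_diff_right IP by simp_all
    ultimately have "(2*b - 2*c)^2 < (2 - 2*a) * (2 - 2*d)" by simp
    thus ?thesis by (simp add: power2_eq_square algebra_simps)
  qed
  have F: "(x01*m1 = x23*m3 \<longleftrightarrow> a = d) \<and> (x23*m3 < x01*m1 \<longleftrightarrow> a < d)"
    by (rule final_alg[OF r00 r01 r02 r03 r10 r11 r12 r13 r20 r21 r22 r23 r30 r31 r32 r33
          mneg n0 n1 n2 n3 Pp Qp])
  have ba: "\<bar>a\<bar> \<le> 1" using Cauchy_Schwarz_ineq2[of "p 0" "p 1"] nrm[of 0] nrm[of 1] unfolding a_def by simp
  have bd: "\<bar>d\<bar> \<le> 1" using Cauchy_Schwarz_ineq2[of "p 2" "p 3"] nrm[of 2] nrm[of 3] unfolding d_def by simp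
  have bA: "\<bar>- (x23*m3)\<bar> \<le> 1" using Cauchy_Schwarz_ineq2[of "v 2" "v 3"] ON[of 2] ON[of 3] v23 by simp
  have bD: "\<bar>- (x01*m1)\<bar> \<le> 1" using Cauchy_Schwarz_ineq2[of "v 0" "v 1"] ON[of 0] ON[of 1] v01 by simp
  have E: "edge_len p 0 1 = arccos a" "edge_len p 2 3 = arccos d"
    "dihedral v 2 3 = arccos (- (x23*m3))" "dihedral v 0 1 = arccos (- (x01*m1))"
    unfolding edge_len_def dihedral_def a_def d_def v01 v23 by simp_all
  have i1: "arccos a = arccos d \<longleftrightarrow> a = d" using arccos_eq_iff ba bd by blast
  have i2: "arccos (- (x23*m3)) = arccos (- (x01*m1)) \<longleftrightarrow> - (x23*m3) = - (x01*m1)"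
    using arccos_eq_iff bA bD by blast
  have i3: "arccos d < arccos a \<longleftrightarrow> a < d" using arccos_less_iff[OF bd ba] .
  have i4: "arccos (- (x23*m3)) < arccos (- (x01*m1)) \<longleftrightarrow> - (x01*m1) < - (x23*m3)"
    using arccos_less_iff[OF bA bD] .
  show ?thesis unfolding E using i1 i2 i3 i4 F by auto
qed

end
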